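(* Let $f:\mathbb R^d\to\mathbb R$ be $L$-smooth and convex with $\pi\propto e^{-f}$. For every $s\ge0$, $$\mathbb E_{q_0\sim\pi,\,p_0\sim\mathcal N(0,I_d)}\big[D_s(q_0,p_0)\big]=0,$$ where $q_0,p_0$ are independent.
   Context: $f$ is twice differentiable with $\int e^{-f}<\infty$ and $\nabla f$ $L$-Lipschitz. For $s\ge0$, $\tilde q_s:=q_0+sp_0-\frac{s^2}{2}\nabla f(q_0+sp_0)$ and $D_s(q_0,p_0):=\nabla f(\tilde q_s)^\top(p_0-s\nabla f(q_0))-\nabla f(q_0)^\top p_0$. *)

theory Defs
  imports "HOL-Analysis.Analysis"
begin

text \<open>Leapfrog-type intermediate point: q~_s = q0 + s p0 - s^2/2 grad f (q0 + s p0).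
  The gradient of f is passed explicitly as gf.\<close>
definition qtil :: "('a::euclidean_space \<Rightarrow> 'a) \<Rightarrow> real \<Rightarrow> 'a \<Rightarrow> 'a \<Rightarrow> 'a" where
  "qtil gf s q0 p0 = q0 + s *\<^sub>R p0 - (s\<^sup>2 / 2) *\<^sub>R gf (q0 + s *\<^sub>R p0)"

text \<open>D_s(q0,p0) = grad f(q~_s) . (p0 - s grad f(q0)) - grad f(q0) . p0\<close>
definition Dfun :: "('a::euclidean_space \<Rightarrow> 'a) \<Rightarrow> real \<Rightarrow> 'a \<Rightarrow> 'a \<Rightarrow> real" where
  "Dfun gf s q0 p0 = gf (qtil gf s q0 p0) \<bullet> (p0 - s *\<^sub>R gf q0) - gf q0 \<bullet> p0"

text \<open>Density of pi proportional to exp(-f) w.r.t. Lebesgue measure.\<close>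
definition pi_dens :: "('a::euclidean_space \<Rightarrow> real) \<Rightarrow> 'a \<Rightarrow> real" where
  "pi_dens f q = exp (- f q) / (\<integral>x. exp (- f x) \<partial>lborel)"

text \<open>Standard Gaussian density N(0, I_d) on a d-dimensional space, d = DIM('a).\<close>
definition gauss_dens :: "'a::euclidean_space \<Rightarrow> real" where
  "gauss_dens p = (2 * pi) powr (- real DIM('a) / 2) * exp (- (norm p)\<^sup>2 / 2)"

end

theory Submission
  imports Defs "HOL-Probability.Distributions"
begin

lemma nn_integral_lborel_shift:
  fixes g :: "'a::euclidean_space \<Rightarrow> ennreal"
  assumes [measurable]: "g \<in> borel_measurable borel"
  shows "(\<integral>\<^sup>+x. g (x + c) \<partial>lborel) = (\<integral>\<^sup>+x. g x \<partial>lborel)"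
proof -
  have "(\<integral>\<^sup>+x. g x \<partial>lborel) = (\<integral>\<^sup>+x. g x \<partial>distr lborel borel ((+) c))"
    by (simp add: lborel_distr_plus)
  also have "\<dots> = (\<integral>\<^sup>+x. g (c + x) \<partial>lborel)"
    by (subst nn_integral_distr) auto
  finally show ?thesis by (simp add: add.commute)
qed

lemma integral_lborel_shift:
  fixes g :: "'a::euclidean_space \<Rightarrow> real"
  shows "(\<integral>x. g (x + c) \<partial>lborel) = (\<integral>x. g x \<partial>lborel)"
proof -
  have "(\<integral>x. g x \<partial>lborel) = (\<integral>x. g x \<partial>distr lborel borel ((+) c))"
    by (simp add: lborel_distr_plus)
  also have "\<dots> = (\<integral>x. g (c + x) \<partial>lborel)"
  proof (cases "g \<in> borel_measurable borel")
    case True then show ?thesis by (subst integral_distr) auto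
  next
    case False
    have "\<not> integrable (distr lborel borel ((+) c)) g"
    proof
      assume "integrable (distr lborel borel ((+) c)) g"
      then have "integrable lborel g" by (simp add: lborel_distr_plus)
      then have "g \<in> borel_measurable borel" by auto
      with False show False by simp
    qed
    moreover have "\<not> integrable lborel (\<lambda>x. g (c + x))"
    proof
      assume "integrable lborel (\<lambda>x. g (c + x))"
      then have "(\<lambda>x. g (c + x)) \<in> borel_measurable lborel" by auto
      then have "(\<lambda>x. g (c + x)) \<in> borel_measurable borel" by simp
      then have "(\<lambda>x. (\<lambda>x. g (c + x)) (x + (- c))) \<in> borel_measurable borel"
        by measurable
      then show False using False by simp
    qed
    ultimately show ?thesis by (simp add: not_integrable_integral_eq)
  qed
  finally show ?thesis by (simp add: add.commute)
qed

lemma integrable_lborel_shift: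
  fixes g :: "'a::euclidean_space \<Rightarrow> real"
  assumes "integrable lborel g"
  shows "integrable lborel (\<lambda>x. g (x + c))"
proof -
  have [measurable]: "g \<in> borel_measurable borel" using assms by auto
  show ?thesis unfolding integrable_iff_bounded
    using assms unfolding integrable_iff_bounded
    by (subst nn_integral_lborel_shift[where g="\<lambda>x. ennreal (norm (g x))"]) auto
qed


lemma dir_zero:
  fixes K DK :: "'a::euclidean_space \<Rightarrow> real"
  assumes K: "integrable lborel K" and DK: "integrable lborel DK"
    and cont: "continuous_on UNIV DK"
    and der: "\<And>x. ((\<lambda>t. K (x + t *\<^sub>R w)) has_real_derivative DK x) (at 0)"
  shows "(\<integral>x. DK x \<partial>lborel) = 0"
proof -
  have [measurable]: "DK \<in> borel_measurable borel"
    using cont by (simp add: borel_measurable_continuous_onI)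
  have [measurable]: "K \<in> borel_measurable borel"
    using K by auto
  have der2: "((\<lambda>t. K (x + t *\<^sub>R w)) has_real_derivative DK (x + t *\<^sub>R w)) (at t)" for x t
  proof -
    have "((\<lambda>\<tau>. K ((x + t *\<^sub>R w) + \<tau> *\<^sub>R w)) has_real_derivative DK (x + t *\<^sub>R w)) (at (t + - t))"
      using der[of "x + t *\<^sub>R w"] by simp
    from this[unfolded DERIV_shift]
    have "((\<lambda>\<tau>. K ((x + t *\<^sub>R w) + (\<tau> + - t) *\<^sub>R w)) has_real_derivative DK (x + t *\<^sub>R w)) (at t)" .
    then have "((\<lambda>\<tau>. K ((x + t *\<^sub>R w) + (\<tau> - t) *\<^sub>R w)) has_real_derivative DK (x + t *\<^sub>R w)) (at t)"
      by simp
    moreover have "(\<lambda>\<tau>. K ((x + t *\<^sub>R w) + (\<tau> - t) *\<^sub>R w)) = (\<lambda>\<tau>. K (x + \<tau> *\<^sub>R w))"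
      by (simp add: algebra_simps)
    ultimately show ?thesis by simp
  qed
  have contt: "continuous_on {0..1} (\<lambda>t. DK (x + t *\<^sub>R w))" for x
    by (intro continuous_on_compose2[OF cont]) (auto intro!: continuous_intros)
  have ftc: "(\<integral>t. indicator {0..1} t *\<^sub>R DK (x + t *\<^sub>R w) \<partial>lborel) = K (x + w) - K x" for x
  proof -
    have "(\<integral>t. indicator {0..1} t *\<^sub>R DK (x + t *\<^sub>R w) \<partial>lborel) = K (x + 1 *\<^sub>R w) - K (x + 0 *\<^sub>R w)"
      by (rule integral_FTC_atLeastAtMost[where F="\<lambda>t. K (x + t *\<^sub>R w)"])
        (auto intro!: has_vector_derivative_at_within contt
          simp: has_real_derivative_iff_has_vector_derivative[symmetric] has_field_derivative_at_within[OF der2])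
    then show ?thesis by simp
  qed
  define H where "H = (\<lambda>(x::'a, t::real). indicator {0..1} t *\<^sub>R DK (x + t *\<^sub>R w))"
  have Hm[measurable]: "H \<in> borel_measurable (lborel \<Otimes>\<^sub>M lborel)"
    unfolding H_def by measurable
  have "(\<integral>\<^sup>+z. ennreal (norm (H z)) \<partial>(lborel \<Otimes>\<^sub>M lborel))
      = (\<integral>\<^sup>+t. \<integral>\<^sup>+x. ennreal (norm (H (x, t))) \<partial>lborel \<partial>lborel)"
    by (rule lborel_pair.nn_integral_snd[symmetric]) measurable
  also have "\<dots> = (\<integral>\<^sup>+t. indicator {0..1::real} t * (\<integral>\<^sup>+x. ennreal (norm (DK x)) \<partial>lborel) \<partial>lborel)"
  proof (intro nn_integral_cong)
    fix t :: real
    have "(\<integral>\<^sup>+x. ennreal (norm (H (x, t))) \<partial>lborel)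
        = (\<integral>\<^sup>+x. indicator {0..1} t * ennreal (norm (DK (x + t *\<^sub>R w))) \<partial>lborel)"
      by (intro nn_integral_cong) (auto simp: H_def split: split_indicator)
    also have "\<dots> = indicator {0..1} t * (\<integral>\<^sup>+x. ennreal (norm (DK (x + t *\<^sub>R w))) \<partial>lborel)"
      by (rule nn_integral_cmult) measurable
    also have "(\<integral>\<^sup>+x. ennreal (norm (DK (x + t *\<^sub>R w))) \<partial>lborel) = (\<integral>\<^sup>+x. ennreal (norm (DK x)) \<partial>lborel)"
      by (rule nn_integral_lborel_shift[where g="\<lambda>x. ennreal (norm (DK x))"]) measurable
    finally show "(\<integral>\<^sup>+x. ennreal (norm (H (x, t))) \<partial>lborel)
        = indicator {0..1} t * (\<integral>\<^sup>+x. ennreal (norm (DK x)) \<partial>lborel)" .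
  qed
  also have "\<dots> = (\<integral>\<^sup>+x. ennreal (norm (DK x)) \<partial>lborel) * emeasure lborel {0..1::real}"
    by (subst nn_integral_multc) auto
  also have "\<dots> < \<infinity>"
    using DK unfolding integrable_iff_bounded by (simp add: ennreal_mult_less_top)
  finally have Hint: "integrable (lborel \<Otimes>\<^sub>M lborel) H"
    unfolding integrable_iff_bounded by simp
  have "(\<integral>t. (\<integral>x. H (x, t) \<partial>lborel) \<partial>lborel) = (\<integral>x. (\<integral>t. H (x, t) \<partial>lborel) \<partial>lborel)"
    using lborel_pair.Fubini_integral[of "\<lambda>x t. H (x, t)"] Hint by simp
  also have "\<dots> = (\<integral>x. K (x + w) - K x \<partial>lborel)"
    using ftc by (simp add: H_def)
  also have "\<dots> = (\<integral>x. K (x + w) \<partial>lborel) - (\<integral>x. K x \<partial>lborel)"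
    by (rule Bochner_Integration.integral_diff[OF integrable_lborel_shift[OF K] K])
  also have "\<dots> = 0" by (simp add: integral_lborel_shift)
  finally have z: "(\<integral>t. (\<integral>x. H (x, t) \<partial>lborel) \<partial>lborel) = 0" .
  have "(\<integral>t. (\<integral>x. H (x, t) \<partial>lborel) \<partial>lborel) = (\<integral>t. indicator {0..1::real} t * (\<integral>x. DK x \<partial>lborel) \<partial>lborel)"
  proof (rule Bochner_Integration.integral_cong[OF refl])
    fix t :: real
    have "(\<integral>x. H (x, t) \<partial>lborel) = (\<integral>x. indicator {0..1} t * DK (x + t *\<^sub>R w) \<partial>lborel)"
      by (simp add: H_def)
    also have "\<dots> = indicator {0..1} t * (\<integral>x. DK (x + t *\<^sub>R w) \<partial>lborel)"
      by simp
    also have "\<dots> = indicator {0..1} t * (\<integral>x. DK x \<partial>lborel)"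
      by (simp add: integral_lborel_shift)
    finally show "(\<integral>x. H (x, t) \<partial>lborel) = indicator {0..1} t * (\<integral>x. DK x \<partial>lborel)" .
  qed
  also have "\<dots> = (\<integral>x. DK x \<partial>lborel)"
    by simp
  finally show ?thesis using z by simp
qed


lemma convex_sublevel_bounded:
  fixes g :: "'a::euclidean_space \<Rightarrow> real"
  assumes cont: "continuous_on UNIV g" and cvx: "convex_on UNIV g"
    and int: "integrable lborel (\<lambda>x. exp (- g x))"
  shows "\<exists>R. \<forall>y. g y \<le> g 0 + 1 \<longrightarrow> norm y \<le> R"
proof -
  define S where "S = {x. g x \<le> g 0 + 1}"
  have gm[measurable]: "g \<in> borel_measurable borel"
    using cont by (simp add: borel_measurable_continuous_onI)
  have Ssets: "S \<in> sets lborel" unfolding S_def by measurable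
  have "emeasure lborel S = (\<integral>\<^sup>+x. indicator S x \<partial>lborel)" using Ssets by simp
  also have "\<dots> \<le> (\<integral>\<^sup>+x. ennreal (exp (g 0 + 1)) * ennreal (exp (- g x)) \<partial>lborel)"
  proof (rule nn_integral_mono)
    fix x
    show "indicator S x \<le> ennreal (exp (g 0 + 1)) * ennreal (exp (- g x))"
    proof (cases "x \<in> S")
      case True
      then have "1 \<le> exp (g 0 + 1) * exp (- g x)"
        by (simp add: S_def exp_add[symmetric])
      then show ?thesis using True by (simp add: ennreal_mult[symmetric])
    qed simp
  qed
  also have "\<dots> = ennreal (exp (g 0 + 1)) * (\<integral>\<^sup>+x. ennreal (exp (- g x)) \<partial>lborel)"
    by (rule nn_integral_cmult) measurable
  also have "\<dots> < \<infinity>"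
    using int unfolding integrable_iff_bounded by (simp add: ennreal_mult_less_top)
  finally have Sfin: "emeasure lborel S < \<infinity>" .
  define M where "M = measure lborel S"
  have SM: "emeasure lborel S = ennreal M"
    using Sfin unfolding M_def by (simp add: emeasure_eq_ennreal_measure less_top)
  have "isCont g 0" using cont by (simp add: continuous_on_eq_continuous_at)
  then obtain r where r: "r > 0" and rb: "\<And>x. dist x 0 < r \<Longrightarrow> dist (g x) (g 0) < 1"
    unfolding continuous_at_eps_delta by (meson zero_less_one)
  have ballS: "norm z < r \<Longrightarrow> z \<in> S" for z
    using rb[of z] by (auto simp: S_def dist_norm)
  define V where "V = measure lborel (ball (0::'a) (r/2))"
  have V: "V > 0" using r by (simp add: V_def)
  have Vc: "emeasure lborel (ball c (r/2)) = ennreal V" for c :: 'a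
    using r by (simp add: V_def emeasure_ball content_ball)
  have key: "norm y \<le> 2 * r * M / V" if yS: "y \<in> S" for y
  proof -
    define n where "n = nat \<lfloor>norm y / (2 * r)\<rfloor>"
    define t where "t = (\<lambda>k::nat. real k * r / norm y)"
    define B where "B = (\<lambda>k. ball (t k *\<^sub>R y) (r/2))"
    have t: "0 \<le> t k \<and> t k \<le> 1/2" if "k \<le> n" for k
    proof (cases "y = 0")
      case True then show ?thesis by (simp add: t_def)
    next
      case False
      have a0: "0 \<le> norm y / (2 * r)" using r by simp
      have "real k \<le> real n" using that by simp
      also have "real n = of_int \<lfloor>norm y / (2 * r)\<rfloor>" unfolding n_def using a0 by simp
      also have "\<dots> \<le> norm y / (2 * r)" by (rule of_int_floor_le)
      finally have "real k \<le> norm y / (2 * r)" .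
      then have "real k * r \<le> norm y / 2" using r by (simp add: field_simps)
      then show ?thesis using False r by (simp add: t_def field_simps)
    qed
    have BS: "B k \<subseteq> S" if "k \<le> n" for k
    proof
      fix x assume "x \<in> B k"
      then have xd: "norm (x - t k *\<^sub>R y) < r / 2" by (simp add: B_def dist_norm norm_minus_commute)
      have tk: "0 \<le> t k" "t k \<le> 1/2" using t[OF that] by auto
      define z where "z = (1 / (1 - t k)) *\<^sub>R (x - t k *\<^sub>R y)"
      have "norm z = norm (x - t k *\<^sub>R y) / (1 - t k)" using tk by (simp add: z_def)
      also have "\<dots> < r"
      proof -
        have "r * t k \<le> r * (1/2)" using tk r by (intro mult_left_mono) auto
        then have "norm (x - t k *\<^sub>R y) < r * (1 - t k)" using xd by (simp add: algebra_simps)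
        moreover have "1 - t k > 0" using tk by simp
        ultimately show ?thesis by (simp add: pos_divide_less_eq)
      qed
      finally have zS: "z \<in> S" by (rule ballS)
      have xe: "x = (1 - t k) *\<^sub>R z + t k *\<^sub>R y" using tk by (simp add: z_def)
      have "g x \<le> (1 - t k) * g z + t k * g y"
        unfolding xe using tk by (intro convex_onD[OF cvx]) auto
      also have "\<dots> \<le> (1 - t k) * (g 0 + 1) + t k * (g 0 + 1)"
        using zS yS tk by (intro add_mono mult_left_mono) (auto simp: S_def)
      finally show "x \<in> S" by (simp add: S_def algebra_simps)
    qed
    have disj: "disjoint_family_on B {..n}"
      unfolding disjoint_family_on_def
    proof (intro ballI impI)
      fix i j assume ij: "i \<in> {..n}" "j \<in> {..n}" "i \<noteq> j"
      show "B i \<inter> B j = {}"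
      proof (cases "y = 0")
        case True
        with ij have False unfolding n_def by auto
        then show ?thesis ..
      next
        case False
        have "dist (t i *\<^sub>R y) (t j *\<^sub>R y) = \<bar>real i - real j\<bar> * r"
        proof -
          have "\<bar>r * real i - r * real j\<bar> = r * \<bar>real i - real j\<bar>"
            using r by (simp add: right_diff_distrib[symmetric] abs_mult)
          then show ?thesis
            using False r by (simp add: t_def dist_norm scaleR_diff_left[symmetric] field_simps abs_mult
              diff_divide_distrib[symmetric])
        qed
        also have "\<dots> \<ge> r" using ij r by (cases "i < j") (auto simp: abs_if)
        finally have "dist (t i *\<^sub>R y) (t j *\<^sub>R y) \<ge> r" .
        show ?thesis
        proof (rule ccontr)
          assume "B i \<inter> B j \<noteq> {}"
          then obtain x where "x \<in> B i" "x \<in> B j" by blast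
          then have "dist (t i *\<^sub>R y) x < r/2" "dist x (t j *\<^sub>R y) < r/2"
            by (auto simp: B_def dist_commute)
          moreover have "dist (t i *\<^sub>R y) (t j *\<^sub>R y) \<le> dist (t i *\<^sub>R y) x + dist x (t j *\<^sub>R y)"
            by (rule dist_triangle)
          ultimately show False using \<open>dist (t i *\<^sub>R y) (t j *\<^sub>R y) \<ge> r\<close> by linarith
        qed
      qed
    qed
    have "ennreal (real (Suc n) * V) = ennreal (real (Suc n)) * ennreal V"
      using V by (intro ennreal_mult) auto
    also have "\<dots> = of_nat (Suc n) * ennreal V"
      by (simp only: ennreal_of_nat_eq_real_of_nat)
    also have "\<dots> = (\<Sum>k\<in>{..n}. emeasure lborel (B k))"
      by (simp add: B_def Vc)
    also have "\<dots> = emeasure lborel (\<Union>k\<in>{..n}. B k)"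
      by (rule sum_emeasure[OF _ disj]) (auto simp: B_def)
    also have "\<dots> \<le> emeasure lborel S"
      using BS Ssets by (intro emeasure_mono) auto
    finally have le: "ennreal (real (Suc n) * V) \<le> ennreal M" using SM by simp
    have pos: "real (Suc n) * V > 0" using V by simp
    have "real (Suc n) * V \<le> M" using le pos by (metis ennreal_le_iff2 linorder_not_le)
    moreover have "norm y / (2 * r) < real (Suc n)"
    proof -
      have a0: "0 \<le> norm y / (2 * r)" using r by simp
      have "real (Suc n) = of_int \<lfloor>norm y / (2 * r)\<rfloor> + 1" unfolding n_def using a0 by simp
      then show ?thesis by linarith
    qed
    ultimately have "norm y / (2 * r) * V < M"
      using V by (meson mult_strict_right_mono order_less_le_trans)
    then have "norm y * V < 2 * r * M" using r by (simp add: field_simps)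
    then show ?thesis using r V by (simp add: field_simps)
  qed
  show ?thesis using key by (auto simp: S_def)
qed

lemma convex_growth:
  fixes g :: "'a::euclidean_space \<Rightarrow> real"
  assumes cont: "continuous_on UNIV g" and cvx: "convex_on UNIV g"
    and int: "integrable lborel (\<lambda>x. exp (- g x))"
  shows "\<exists>a>0. \<exists>b. \<forall>x. a * norm x - b \<le> g x"
proof -
  obtain R where R: "\<And>y. g y \<le> g 0 + 1 \<Longrightarrow> norm y \<le> R"
    using convex_sublevel_bounded[OF assms] by blast
  define R1 where "R1 = max R 0 + 1"
  have R1: "R1 > 0" "R1 > R" by (auto simp: R1_def)
  have "compact (g ` cball 0 R1)"
    by (rule compact_continuous_image) (auto intro: continuous_on_subset[OF cont])
  then obtain B where B: "\<And>x. x \<in> cball 0 R1 \<Longrightarrow> norm (g x) \<le> B"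
    using compact_imp_bounded bounded_iff by (metis image_eqI)
  define b where "b = max (1 + B) (- g 0)"
  have "(1 / R1) * norm x - b \<le> g x" for x
  proof (cases "norm x \<le> R1")
    case True
    then have "norm (g x) \<le> B" by (intro B) simp
    moreover have "(1 / R1) * norm x \<le> 1" using True R1 by (simp add: field_simps)
    ultimately show ?thesis unfolding b_def by (smt (verit) abs_le_D2 real_norm_def)
  next
    case False
    then have nx: "norm x > R1" by simp
    define \<theta> where "\<theta> = R1 / norm x"
    have nx0: "norm x > 0" using nx R1 by linarith
    have th: "0 < \<theta>" "\<theta> \<le> 1" using nx nx0 R1 by (auto simp: \<theta>_def field_simps)
    define y where "y = \<theta> *\<^sub>R x"
    have "norm y = R1" using nx nx0 R1 by (simp add: y_def \<theta>_def)
    then have gy: "g y > g 0 + 1" using R R1 by (meson linorder_not_le)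
    have "g y = g ((1 - \<theta>) *\<^sub>R 0 + \<theta> *\<^sub>R x)" by (simp add: y_def)
    also have "\<dots> \<le> (1 - \<theta>) * g 0 + \<theta> * g x"
      using th by (intro convex_onD[OF cvx]) auto
    finally have "\<theta> * (g x - g 0) > 1" using gy by (simp add: algebra_simps)
    then have "g x - g 0 > 1 / \<theta>" using th by (simp add: field_simps)
    also have "1 / \<theta> = (1 / R1) * norm x" using nx R1 by (simp add: \<theta>_def)
    finally show ?thesis unfolding b_def by linarith
  qed
  then show ?thesis using R1 by (intro exI[of _ "1/R1"]) auto
qed

lemma convex_half_integrable:
  fixes g :: "'a::euclidean_space \<Rightarrow> real"
  assumes cont: "continuous_on UNIV g" and cvx: "convex_on UNIV g"
    and int: "integrable lborel (\<lambda>x. exp (- g x))"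
  shows "integrable lborel (\<lambda>x. exp (- g x / 2))"
proof -
  have gm[measurable]: "g \<in> borel_measurable borel"
    using cont by (simp add: borel_measurable_continuous_onI)
  have "(\<integral>\<^sup>+x. ennreal (exp (- g ((1/2) *\<^sub>R x))) \<partial>lborel)
      = (\<integral>\<^sup>+x. ennreal (exp (- g ((1/2) *\<^sub>R x))) \<partial>density (distr lborel borel ((*\<^sub>R) 2)) (\<lambda>_. ennreal (2 ^ DIM('a))))"
    using lborel_affine[of "2::real" "0::'a"] by simp
  also have "\<dots> = (\<integral>\<^sup>+x. ennreal (2 ^ DIM('a)) * ennreal (exp (- g x)) \<partial>lborel)"
    by (subst nn_integral_density) (auto simp: nn_integral_distr ennreal_power)
  also have "\<dots> = ennreal (2 ^ DIM('a)) * (\<integral>\<^sup>+x. ennreal (exp (- g x)) \<partial>lborel)"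
    by (rule nn_integral_cmult) measurable
  also have "\<dots> < \<infinity>"
    using int unfolding integrable_iff_bounded by (simp add: ennreal_mult_less_top)
  finally have i2: "integrable lborel (\<lambda>x. exp (- g ((1/2) *\<^sub>R x)))"
    unfolding integrable_iff_bounded by simp
  show ?thesis
  proof (rule Bochner_Integration.integrable_bound[OF integrable_mult_right[OF i2, of "exp (g 0 / 2)"]])
    show "(\<lambda>x. exp (- g x / 2)) \<in> borel_measurable lborel" by measurable
    show "AE x in lborel. norm (exp (- g x / 2)) \<le> norm (exp (g 0 / 2) * exp (- g ((1/2) *\<^sub>R x)))"
    proof (rule AE_I2)
      fix x :: 'a
      have "g ((1/2) *\<^sub>R x) = g ((1 - 1/2) *\<^sub>R 0 + (1/2) *\<^sub>R x)" by simp
      also have "\<dots> \<le> (1 - 1/2) * g 0 + (1/2) * g x"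
        by (intro convex_onD[OF cvx]) auto
      finally have "- g x / 2 \<le> g 0 / 2 + - g ((1/2) *\<^sub>R x)" by simp
      then show "norm (exp (- g x / 2)) \<le> norm (exp (g 0 / 2) * exp (- g ((1/2) *\<^sub>R x)))"
        by (simp add: exp_add[symmetric])
    qed
  qed
qed

lemma convex_moment:
  fixes g :: "'a::euclidean_space \<Rightarrow> real"
  assumes cont: "continuous_on UNIV g" and cvx: "convex_on UNIV g"
    and int: "integrable lborel (\<lambda>x. exp (- g x))"
  shows "integrable lborel (\<lambda>x. exp (- g x) * norm x ^ 2)"
proof -
  have gm[measurable]: "g \<in> borel_measurable borel"
    using cont by (simp add: borel_measurable_continuous_onI)
  obtain a b where a: "a > 0" and ab: "\<And>x. a * norm x - b \<le> g x"
    using convex_growth[OF assms] by blast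
  define C where "C = 16 / a^2 * exp (b/2)"
  show ?thesis
  proof (rule Bochner_Integration.integrable_bound[OF integrable_mult_right[OF convex_half_integrable[OF assms], of C]])
    show "(\<lambda>x. exp (- g x) * norm x ^ 2) \<in> borel_measurable lborel" by measurable
    show "AE x in lborel. norm (exp (- g x) * norm x ^ 2) \<le> norm (C * exp (- g x / 2))"
    proof (rule AE_I2)
      fix x :: 'a
      define y where "y = a * norm x / 4"
      have y0: "y \<ge> 0" using a by (simp add: y_def)
      have "y ^ 2 \<le> (1 + y) ^ 2" using y0 by (intro power_mono) auto
      also have "\<dots> \<le> exp y ^ 2" using y0 by (intro power_mono) auto
      also have "exp y ^ 2 = exp (a * norm x / 2)" by (simp add: y_def power2_eq_square exp_add[symmetric])
      finally have "a^2 * norm x ^ 2 / 16 \<le> exp (a * norm x / 2)" by (simp add: y_def power_mult_distrib power_divide)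
      then have n2: "norm x ^ 2 \<le> 16 / a^2 * exp (a * norm x / 2)"
        using a by (simp add: field_simps)
      have e2: "exp (- g x / 2) \<le> exp ((b - a * norm x) / 2)" using ab[of x] by simp
      have "exp (- g x) * norm x ^ 2 = exp (- g x / 2) * (exp (- g x / 2) * norm x ^ 2)"
        by (simp add: exp_add[symmetric])
      also have "exp (- g x / 2) * norm x ^ 2 \<le> exp ((b - a * norm x) / 2) * (16 / a^2 * exp (a * norm x / 2))"
        by (intro mult_mono e2 n2) auto
      also have "exp ((b - a * norm x) / 2) * (16 / a^2 * exp (a * norm x / 2)) = C"
        by (simp add: C_def exp_add[symmetric] diff_divide_distrib)
      finally show "norm (exp (- g x) * norm x ^ 2) \<le> norm (C * exp (- g x / 2))"
        using a by (simp add: C_def mult.commute)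
    qed
  qed
qed


lemma convex_sqnorm: "convex_on UNIV (\<lambda>p::'a::real_inner. norm p ^ 2 / 2)"
proof (rule convex_onI)
  fix t :: real and x y :: 'a
  assume t: "t > 0" "t < 1"
  have e: "norm ((1 - t) *\<^sub>R x + t *\<^sub>R y) ^ 2 = (1 - t) * norm x ^ 2 + t * norm y ^ 2 - t * (1 - t) * norm (x - y) ^ 2"
    unfolding power2_norm_eq_inner
    by (simp add: inner_add_left inner_add_right inner_diff_left inner_diff_right
        inner_commute algebra_simps)
  have "t * (1 - t) * norm (x - y) ^ 2 \<ge> 0" using t by simp
  then show "norm ((1 - t) *\<^sub>R x + t *\<^sub>R y) ^ 2 / 2 \<le> (1 - t) * (norm x ^ 2 / 2) + t * (norm y ^ 2 / 2)"
    unfolding e by simp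
qed simp

lemma gauss_exp_integrable:
  "integrable lborel (\<lambda>p::'a::euclidean_space. exp (- (norm p ^ 2 / 2)))"
proof -
  have int1: "integrable lborel (\<lambda>x::real. exp (- x\<^sup>2 / 2))"
  proof -
    have "integrable lborel (\<lambda>x. sqrt (2 * pi) * normal_density 0 1 x)" by simp
    moreover have "(\<lambda>x. sqrt (2 * pi) * normal_density 0 1 x) = (\<lambda>x::real. exp (- x\<^sup>2 / 2))"
      by (simp add: normal_density_def)
    ultimately show ?thesis by simp
  qed
  have fin1: "(\<integral>\<^sup>+x. ennreal (exp (- x\<^sup>2 / 2)) \<partial>lborel) < \<infinity>"
    using int1 unfolding integrable_iff_bounded by simp
  have eq: "exp (- (norm p ^ 2 / 2)) = (\<Prod>b\<in>Basis. exp (- (p \<bullet> b)\<^sup>2 / 2))" for p :: 'a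
  proof -
    have "norm p ^ 2 = (\<Sum>b\<in>Basis. (p \<bullet> b)\<^sup>2)"
      unfolding power2_norm_eq_inner by (subst euclidean_inner) (simp add: power2_eq_square)
    then show ?thesis by (simp add: exp_sum[symmetric] sum_divide_distrib sum_negf)
  qed
  have "(\<integral>\<^sup>+p. ennreal (exp (- (norm p ^ 2 / 2))) \<partial>(lborel::'a measure))
      = (\<integral>\<^sup>+p. (\<Prod>b\<in>(Basis::'a set). ennreal (exp (- (p \<bullet> b)\<^sup>2 / 2))) \<partial>lborel)"
    by (simp add: eq prod_ennreal)
  also have "\<dots> = (\<Prod>b\<in>(Basis::'a set). (\<integral>\<^sup>+x. ennreal (exp (- x\<^sup>2 / 2)) \<partial>lborel))"
    by (rule nn_integral_lborel_prod[where f="\<lambda>b x. ennreal (exp (- x\<^sup>2 / 2))"]) auto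
  also have "\<dots> < \<infinity>"
    using fin1 by (simp add: less_top ennreal_prod_eq_top power_less_top_ennreal)
  finally show ?thesis unfolding integrable_iff_bounded by simp
qed

lemma gauss_moment:
  "integrable lborel (\<lambda>p::'a::euclidean_space. exp (- (norm p ^ 2 / 2)) * norm p ^ 2)"
  by (rule convex_moment[OF _ convex_sqnorm gauss_exp_integrable]) (intro continuous_intros, simp)


lemma integrable_prod_mult:
  fixes a :: "'a::euclidean_space \<Rightarrow> real" and b :: "'b::euclidean_space \<Rightarrow> real"
  assumes ia: "integrable lborel a" and ib: "integrable lborel b"
  shows "integrable lborel (\<lambda>(x, y). a x * b y)"
proof -
  have [measurable]: "a \<in> borel_measurable borel" "b \<in> borel_measurable borel"
    using ia ib by auto
  have "(\<integral>\<^sup>+z. ennreal (norm ((\<lambda>(x, y). a x * b y) z)) \<partial>(lborel \<Otimes>\<^sub>M lborel))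
      = (\<integral>\<^sup>+x. \<integral>\<^sup>+y. ennreal (norm ((\<lambda>(x, y). a x * b y) (x, y))) \<partial>lborel \<partial>lborel)"
    by (rule lborel.nn_integral_fst[symmetric]) measurable
  also have "\<dots> = (\<integral>\<^sup>+x. \<integral>\<^sup>+y. ennreal (norm (a x)) * ennreal (norm (b y)) \<partial>lborel \<partial>lborel)"
    by (simp add: abs_mult ennreal_mult)
  also have "\<dots> = (\<integral>\<^sup>+x. ennreal (norm (a x)) * (\<integral>\<^sup>+y. ennreal (norm (b y)) \<partial>lborel) \<partial>lborel)"
    by (subst nn_integral_cmult) auto
  also have "\<dots> = (\<integral>\<^sup>+x. ennreal (norm (a x)) \<partial>lborel) * (\<integral>\<^sup>+y. ennreal (norm (b y)) \<partial>lborel)"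
    by (subst nn_integral_multc) auto
  also have "\<dots> < \<infinity>"
    using ia ib unfolding integrable_iff_bounded by (simp add: ennreal_mult_less_top)
  finally have "integrable (lborel \<Otimes>\<^sub>M lborel) (\<lambda>(x, y). a x * b y)"
    unfolding integrable_iff_bounded by simp
  then show ?thesis by (simp add: lborel_prod)
qed

lemma poly_bound:
  fixes x y u v A B C D E F :: real
  assumes "0 \<le> x" "0 \<le> y" "0 \<le> A" "0 \<le> B" "0 \<le> C" "0 \<le> D" "0 \<le> E" "0 \<le> F"
    and "0 \<le> u" "u \<le> A + B * x + C * y" "0 \<le> v" "v \<le> D + E * x + F * y"
  shows "u * v \<le> 3 * ((A + B + C) * (D + E + F)) * (1 + x^2 + y^2)"
proof -
  have e1: "(A + B + C) * (1 + x + y) = A + B * x + C * y + (A * (x + y) + B * (1 + y) + C * (1 + x))"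
    by (simp add: algebra_simps)
  have "0 \<le> A * (x + y) + B * (1 + y) + C * (1 + x)" using assms by simp
  then have u: "u \<le> (A + B + C) * (1 + x + y)" using e1 assms by linarith
  have e2: "(D + E + F) * (1 + x + y) = D + E * x + F * y + (D * (x + y) + E * (1 + y) + F * (1 + x))"
    by (simp add: algebra_simps)
  have "0 \<le> D * (x + y) + E * (1 + y) + F * (1 + x)" using assms by simp
  then have v: "v \<le> (D + E + F) * (1 + x + y)" using e2 assms by linarith
  have "u * v \<le> ((A + B + C) * (1 + x + y)) * ((D + E + F) * (1 + x + y))"
    using u v assms by (intro mult_mono) auto
  also have "\<dots> = ((A + B + C) * (D + E + F)) * (1 + x + y)^2"
    by (simp add: power2_eq_square algebra_simps)
  also have "\<dots> \<le> ((A + B + C) * (D + E + F)) * (3 * (1 + x^2 + y^2))"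
  proof (rule mult_left_mono)
    have "0 \<le> (1 - x)^2 + (1 - y)^2 + (x - y)^2" by simp
    then show "(1 + x + y)^2 \<le> 3 * (1 + x^2 + y^2)"
      by (simp add: power2_eq_square algebra_simps)
  qed (use assms in simp)
  finally show ?thesis by (simp add: algebra_simps)
qed

lemma line_deriv_f:
  assumes grad: "\<And>x. (f has_derivative (\<lambda>h. gf x \<bullet> h)) (at x)"
  shows "((\<lambda>t::real. f (q + t *\<^sub>R v)) has_real_derivative (gf q \<bullet> v)) (at 0)"
proof -
  have l: "((\<lambda>t::real. q + t *\<^sub>R v) has_derivative (\<lambda>t. t *\<^sub>R v)) (at 0)"
    by (auto intro!: derivative_eq_intros)
  have "((\<lambda>t. f (q + t *\<^sub>R v)) has_derivative (\<lambda>t. gf q \<bullet> (t *\<^sub>R v))) (at 0)"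
    by (rule has_derivative_compose[OF l]) (use grad[of q] in simp)
  moreover have "(\<lambda>t. gf q \<bullet> (t *\<^sub>R v)) = (*) (gf q \<bullet> v)"
    by (auto simp: fun_eq_iff)
  ultimately show ?thesis by (simp add: has_field_derivative_def)
qed

lemma norm_axis_shift:
  fixes p :: "real ^ 'd"
  shows "norm (p - t *\<^sub>R axis i 1) ^ 2 = norm p ^ 2 - 2 * t * p $ i + t ^ 2"
  unfolding power2_norm_eq_inner
  by (simp add: inner_diff_left inner_diff_right inner_axis inner_axis' inner_axis_axis
      power2_eq_square algebra_simps)

lemma key_zero:
  fixes f :: "real ^ 'd \<Rightarrow> real" and gf G :: "real ^ 'd \<Rightarrow> real ^ 'd" and s L M :: real
  assumes grad: "\<And>x. (f has_derivative (\<lambda>h. gf x \<bullet> h)) (at x)"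
    and fin: "integrable lborel (\<lambda>x. exp (- f x))"
    and cvx: "convex_on UNIV f"
    and gL: "L-lipschitz_on UNIV gf"
    and GL: "M-lipschitz_on UNIV G"
  shows "integrable lborel (\<lambda>(q, p). exp (- f q) * exp (- (norm p ^ 2 / 2)) * (G (q + s *\<^sub>R p) \<bullet> (p - s *\<^sub>R gf q)))
     \<and> (\<integral>(q, p). exp (- f q) * exp (- (norm p ^ 2 / 2)) * (G (q + s *\<^sub>R p) \<bullet> (p - s *\<^sub>R gf q)) \<partial>lborel) = 0"
proof -
  have fcont: "continuous_on UNIV f"
    using grad by (meson continuous_at_imp_continuous_on has_derivative_continuous)
  have gfcont: "continuous_on UNIV gf" using gL by (rule lipschitz_on_continuous_on)
  have Gcont: "continuous_on UNIV G" using GL by (rule lipschitz_on_continuous_on)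
  have L0: "L \<ge> 0" using gL by (rule lipschitz_on_nonneg)
  have M0: "M \<ge> 0" using GL by (rule lipschitz_on_nonneg)
  define N where "N = (\<lambda>(q::real^'d, p::real^'d). exp (- f q) * exp (- (norm p ^ 2 / 2)) * (1 + norm q ^ 2 + norm p ^ 2))"
  have Nint: "integrable lborel N"
  proof -
    have i1: "integrable lborel (\<lambda>(q::real^'d, p::real^'d). (exp (- f q) + exp (- f q) * norm q ^ 2) * exp (- (norm p ^ 2 / 2)))"
      by (intro integrable_prod_mult Bochner_Integration.integrable_add fin gauss_exp_integrable
          convex_moment fcont cvx)
    have i2: "integrable lborel (\<lambda>(q::real^'d, p::real^'d). exp (- f q) * (exp (- (norm p ^ 2 / 2)) * norm p ^ 2))"
      by (intro integrable_prod_mult fin gauss_moment)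
    have "integrable lborel (\<lambda>z. (\<lambda>(q::real^'d, p::real^'d). (exp (- f q) + exp (- f q) * norm q ^ 2) * exp (- (norm p ^ 2 / 2))) z
        + (\<lambda>(q::real^'d, p::real^'d). exp (- f q) * (exp (- (norm p ^ 2 / 2)) * norm p ^ 2)) z)"
      by (rule Bochner_Integration.integrable_add[OF i1 i2])
    moreover have "(\<lambda>z. (\<lambda>(q::real^'d, p::real^'d). (exp (- f q) + exp (- f q) * norm q ^ 2) * exp (- (norm p ^ 2 / 2))) z
        + (\<lambda>(q::real^'d, p::real^'d). exp (- f q) * (exp (- (norm p ^ 2 / 2)) * norm p ^ 2)) z) = N"
      by (auto simp: N_def fun_eq_iff algebra_simps)
    ultimately show ?thesis by simp
  qed
  define A where "A = norm (G 0)"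
  define B where "B = M"
  define C where "C = M * \<bar>s\<bar>"
  define D where "D = \<bar>s\<bar> * norm (gf 0)"
  define E where "E = \<bar>s\<bar> * L"
  have ABC: "A \<ge> 0" "B \<ge> 0" "C \<ge> 0" "D \<ge> 0" "E \<ge> 0"
    using M0 L0 by (auto simp: A_def B_def C_def D_def E_def)
  have Gb: "norm (G (q + s *\<^sub>R p)) \<le> A + B * norm q + C * norm p" for q p
  proof -
    have "norm (G (q + s *\<^sub>R p) - G 0) \<le> M * norm (q + s *\<^sub>R p - 0)"
      by (rule lipschitz_on_normD[OF GL]) auto
    also have "\<dots> \<le> M * (norm q + \<bar>s\<bar> * norm p)"
      using M0 by (intro mult_left_mono) (auto intro: order_trans[OF norm_triangle_ineq])
    finally show ?thesis unfolding A_def B_def C_def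
      using norm_triangle_ineq2[of "G (q + s *\<^sub>R p)" "G 0"] by (simp add: algebra_simps)
  qed
  have gb: "norm (gf q) \<le> norm (gf 0) + L * norm q" for q
  proof -
    have "norm (gf q - gf 0) \<le> L * norm (q - 0)"
      by (rule lipschitz_on_normD[OF gL]) auto
    then show ?thesis using norm_triangle_ineq2[of "gf q" "gf 0"] by simp
  qed
  have vb: "norm (p - s *\<^sub>R gf q) \<le> D + E * norm q + 1 * norm p" for q p
  proof -
    have "norm (p - s *\<^sub>R gf q) \<le> norm p + \<bar>s\<bar> * norm (gf q)"
      using norm_triangle_ineq4[of p "s *\<^sub>R gf q"] by simp
    also have "\<dots> \<le> norm p + \<bar>s\<bar> * (norm (gf 0) + L * norm q)"
      by (intro add_left_mono mult_left_mono gb) auto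
    finally show ?thesis by (simp add: D_def E_def algebra_simps)
  qed
  define KC where "KC = 3 * ((A + B + C) * (D + E + 1))"
  define KC' where "KC' = 3 * ((A + B + C) * (1 + 0 + 0))"
  define \<rho> where "\<rho> = (\<lambda>(q::real^'d, p::real^'d). exp (- f q) * exp (- (norm p ^ 2 / 2)))"
  have \<rho>pos: "\<rho> z > 0" for z by (auto simp: \<rho>_def split: prod.splits)
  define K where "K = (\<lambda>i (z::(real^'d) \<times> (real^'d)). G (fst z + s *\<^sub>R snd z) $ i * \<rho> z)"
  define DK where "DK = (\<lambda>i (z::(real^'d) \<times> (real^'d)). G (fst z + s *\<^sub>R snd z) $ i * \<rho> z * (snd z $ i - s * gf (fst z) $ i))"
  have \<rho>cont: "continuous_on UNIV \<rho>"
    unfolding \<rho>_def case_prod_beta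
    by (intro continuous_intros continuous_on_compose2[OF fcont]) auto
  have Ccont: "continuous_on UNIV (\<lambda>z::(real^'d) \<times> (real^'d). G (fst z + s *\<^sub>R snd z))"
    by (intro continuous_intros continuous_on_compose2[OF Gcont]) auto
  have gfcont2: "continuous_on UNIV (\<lambda>z::(real^'d) \<times> (real^'d). gf (fst z))"
    by (intro continuous_intros continuous_on_compose2[OF gfcont]) auto
  have Kcont: "continuous_on UNIV (K i)" for i
    unfolding K_def by (intro continuous_intros Ccont \<rho>cont)
  have DKcont: "continuous_on UNIV (DK i)" for i
    unfolding DK_def by (intro continuous_intros Ccont \<rho>cont gfcont2)
  have Kint: "integrable lborel (K i)" for i
  proof (rule Bochner_Integration.integrable_bound[OF integrable_mult_right[OF Nint, of KC']])
    show "K i \<in> borel_measurable lborel" using Kcont[of i] by (simp add: borel_measurable_continuous_onI)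
    show "AE z in lborel. norm (K i z) \<le> norm (KC' * N z)"
    proof (rule AE_I2)
      fix z :: "(real^'d) \<times> (real^'d)"
      obtain q p where z: "z = (q, p)" by fastforce
      have "\<bar>G (q + s *\<^sub>R p) $ i\<bar> * 1 \<le> 3 * ((A + B + C) * (1 + 0 + 0)) * (1 + norm q ^ 2 + norm p ^ 2)"
        by (rule poly_bound) (use ABC Gb[of q p] component_le_norm_cart[of "G (q + s *\<^sub>R p)" i] in auto)
      then have "\<bar>G (q + s *\<^sub>R p) $ i\<bar> * \<rho> z \<le> KC' * (1 + norm q ^ 2 + norm p ^ 2) * \<rho> z"
        using \<rho>pos[of z] by (intro mult_right_mono) (auto simp: KC'_def)
      moreover have "KC' \<ge> 0" using ABC by (simp add: KC'_def)
      ultimately show "norm (K i z) \<le> norm (KC' * N z)"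
        by (simp add: K_def N_def z \<rho>_def abs_mult algebra_simps)
    qed
  qed
  have DKint: "integrable lborel (DK i)" for i
  proof (rule Bochner_Integration.integrable_bound[OF integrable_mult_right[OF Nint, of KC]])
    show "DK i \<in> borel_measurable lborel" using DKcont[of i] by (simp add: borel_measurable_continuous_onI)
    show "AE z in lborel. norm (DK i z) \<le> norm (KC * N z)"
    proof (rule AE_I2)
      fix z :: "(real^'d) \<times> (real^'d)"
      obtain q p where z: "z = (q, p)" by fastforce
      have c2: "\<bar>p $ i - s * gf q $ i\<bar> \<le> D + E * norm q + 1 * norm p"
        using component_le_norm_cart[of "p - s *\<^sub>R gf q" i] vb[of p q] by simp
      have "\<bar>G (q + s *\<^sub>R p) $ i\<bar> * \<bar>p $ i - s * gf q $ i\<bar> \<le> 3 * ((A + B + C) * (D + E + 1)) * (1 + norm q ^ 2 + norm p ^ 2)"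
        by (rule poly_bound) (use ABC Gb[of q p] component_le_norm_cart[of "G (q + s *\<^sub>R p)" i] c2 in auto)
      then have "\<bar>G (q + s *\<^sub>R p) $ i\<bar> * \<bar>p $ i - s * gf q $ i\<bar> * \<rho> z \<le> KC * (1 + norm q ^ 2 + norm p ^ 2) * \<rho> z"
        using \<rho>pos[of z] by (intro mult_right_mono) (auto simp: KC_def)
      moreover have "KC \<ge> 0" using ABC by (simp add: KC_def)
      moreover have "norm (DK i z) = \<bar>G (q + s *\<^sub>R p) $ i\<bar> * \<bar>p $ i - s * gf q $ i\<bar> * \<rho> z"
        using \<rho>pos[of z] by (simp add: DK_def z abs_mult)
      moreover have "N z = (1 + norm q ^ 2 + norm p ^ 2) * \<rho> z"
        by (simp add: N_def z \<rho>_def)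
      moreover have "0 \<le> (1 + norm q ^ 2 + norm p ^ 2) * \<rho> z" using \<rho>pos[of z] by simp
      moreover have "\<bar>\<rho> z\<bar> = \<rho> z" using \<rho>pos[of z] by simp
      ultimately show "norm (DK i z) \<le> norm (KC * N z)"
        by (simp add: abs_mult mult.assoc)
    qed
  qed
  have DKzero: "(\<integral>z. DK i z \<partial>lborel) = 0" for i
  proof (rule dir_zero[OF Kint DKint DKcont, where w="(s *\<^sub>R axis i 1, - axis i 1)"])
    fix z :: "(real^'d) \<times> (real^'d)"
    obtain q p where z: "z = (q, p)" by fastforce
    define c where "c = G (q + s *\<^sub>R p) $ i"
    define e where "e = axis i (1::real)"
    have eqf: "K i (z + t *\<^sub>R (s *\<^sub>R axis i 1, - axis i 1))
        = c * (exp (- f (q + t *\<^sub>R (s *\<^sub>R e))) * exp (- ((norm p ^ 2 - 2 * t * p $ i + t ^ 2) / 2)))" for t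
    proof -
      have "q + t *\<^sub>R s *\<^sub>R e + s *\<^sub>R (p + - (t *\<^sub>R e)) = q + s *\<^sub>R p"
        by (simp add: algebra_simps)
      moreover have "norm (p + - (t *\<^sub>R e)) ^ 2 = norm p ^ 2 - 2 * t * p $ i + t ^ 2"
        using norm_axis_shift[of p t i] by (simp add: e_def)
      ultimately show ?thesis
        by (simp add: K_def \<rho>_def z c_def e_def add.assoc)
    qed
    have d1: "((\<lambda>t. f (q + t *\<^sub>R (s *\<^sub>R e))) has_real_derivative (s * gf q $ i)) (at 0)"
      using line_deriv_f[OF grad, of q "s *\<^sub>R e"] by (simp add: e_def inner_axis)
    have d2: "((\<lambda>t. exp (- f (q + t *\<^sub>R (s *\<^sub>R e)))) has_real_derivative exp (- f q) * (- (s * gf q $ i))) (at 0)"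
      using DERIV_fun_exp[OF DERIV_minus[OF d1]] by simp
    have d3: "((\<lambda>t::real. - ((norm p ^ 2 - 2 * t * p $ i + t ^ 2) / 2)) has_real_derivative p $ i) (at 0)"
      by (auto intro!: derivative_eq_intros)
    have d4: "((\<lambda>t. exp (- ((norm p ^ 2 - 2 * t * p $ i + t ^ 2) / 2))) has_real_derivative exp (- (norm p ^ 2 / 2)) * p $ i) (at 0)"
      using DERIV_fun_exp[OF d3] by simp
    have d5: "((\<lambda>t. c * (exp (- f (q + t *\<^sub>R (s *\<^sub>R e))) * exp (- ((norm p ^ 2 - 2 * t * p $ i + t ^ 2) / 2))))
        has_real_derivative DK i z) (at 0)"
      using DERIV_cmult[OF DERIV_mult[OF d2 d4], of c]
      by (rule DERIV_cong) (simp add: DK_def z \<rho>_def c_def algebra_simps)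
    show "((\<lambda>t. K i (z + t *\<^sub>R (s *\<^sub>R axis i 1, - axis i 1))) has_real_derivative DK i z) (at 0)"
      unfolding eqf by (rule d5)
  qed
  have sumeq: "(\<lambda>(q, p). exp (- f q) * exp (- (norm p ^ 2 / 2)) * (G (q + s *\<^sub>R p) \<bullet> (p - s *\<^sub>R gf q)))
      = (\<lambda>z. \<Sum>i\<in>UNIV. DK i z)"
    by (auto simp: fun_eq_iff DK_def \<rho>_def inner_vec_def sum_distrib_left algebra_simps)
  have "integrable lborel (\<lambda>z. \<Sum>i\<in>UNIV. DK i z)"
    by (intro Bochner_Integration.integrable_sum DKint)
  moreover have "(\<integral>z. (\<Sum>i\<in>UNIV. DK i z) \<partial>lborel) = 0"
    by (subst Bochner_Integration.integral_sum) (auto simp: DKint DKzero)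
  ultimately show ?thesis unfolding sumeq by simp
qed


theorem lemma14:
  fixes f :: "real ^ 'd \<Rightarrow> real" and gf :: "real ^ 'd \<Rightarrow> real ^ 'd"
    and L s :: real
  assumes grad: "\<And>x. (f has_derivative (\<lambda>h. gf x \<bullet> h)) (at x)"
    and twice: "\<And>x. gf differentiable (at x)"
    and fin: "integrable lborel (\<lambda>x. exp (- f x))"
    and smooth: "L-lipschitz_on UNIV gf"
    and cvx: "convex_on UNIV f"
    and s: "s \<ge> 0"
  shows "integrable lborel
           (\<lambda>(q0, p0). pi_dens f q0 * gauss_dens p0 * Dfun gf s q0 p0)
       \<and> (\<integral>(q0, p0). pi_dens f q0 * gauss_dens p0 * Dfun gf s q0 p0 \<partial>lborel) = 0"
proof -
  define G where "G = (\<lambda>u. gf (u - (s\<^sup>2 / 2) *\<^sub>R gf u))"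
  have GL: "(L * (1 + \<bar>s\<^sup>2 / 2\<bar> * L))-lipschitz_on UNIV G"
    unfolding G_def
    by (rule lipschitz_on_compose2[OF lipschitz_on_diff[OF lipschitz_on_id lipschitz_on_cmult[OF smooth]]
          lipschitz_on_subset[OF smooth]]) auto
  define F1 where "F1 = (\<lambda>(q, p). exp (- f q) * exp (- (norm p ^ 2 / 2)) * (G (q + s *\<^sub>R p) \<bullet> (p - s *\<^sub>R gf q)))"
  define F2 where "F2 = (\<lambda>(q, p). exp (- f q) * exp (- (norm p ^ 2 / 2)) * (gf (q + 0 *\<^sub>R p) \<bullet> (p - 0 *\<^sub>R gf q)))"
  have k1: "integrable lborel F1" "(\<integral>z. F1 z \<partial>lborel) = 0"
    using key_zero[OF grad fin cvx smooth GL, of s] unfolding F1_def by auto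
  have k2: "integrable lborel F2" "(\<integral>z. F2 z \<partial>lborel) = 0"
    using key_zero[OF grad fin cvx smooth smooth, of 0] unfolding F2_def by auto
  define Z where "Z = (\<integral>x. exp (- f x) \<partial>lborel)"
  define c where "c = (2 * pi) powr (- real DIM(real ^ 'd) / 2)"
  have eq: "(\<lambda>(q0, p0). pi_dens f q0 * gauss_dens p0 * Dfun gf s q0 p0) = (\<lambda>z. (c / Z) * (F1 z - F2 z))"
  proof (rule ext, clarify)
    fix q p :: "real ^ 'd"
    have aux: "(e1 / Z) * (c * e2) * (X - Y) = (c / Z) * (e1 * e2 * X - e1 * e2 * Y)" for e1 e2 X Y :: real
      by (simp add: divide_inverse algebra_simps)
    have D: "Dfun gf s q p = G (q + s *\<^sub>R p) \<bullet> (p - s *\<^sub>R gf q) - gf q \<bullet> p"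
      by (simp add: Dfun_def qtil_def G_def)
    have P: "pi_dens f q = exp (- f q) / Z" by (simp add: pi_dens_def Z_def)
    have Q: "gauss_dens p = c * exp (- (norm p ^ 2 / 2))" by (simp add: gauss_dens_def c_def)
    show "pi_dens f q * gauss_dens p * Dfun gf s q p = c / Z * (F1 (q, p) - F2 (q, p))"
      unfolding D P Q aux F1_def F2_def by simp
  qed
  have "integrable lborel (\<lambda>z. (c / Z) * (F1 z - F2 z))"
    using k1 k2 by auto
  moreover have "(\<integral>z. (c / Z) * (F1 z - F2 z) \<partial>lborel) = 0"
    using k1 k2 by simp
  ultimately show ?thesis unfolding eq by simp
qed

end
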